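(* Consider the setting described in the context. Let $K\in[0,+\infty]$ and let $\zeta$ be a measurable function that is bounded from below on $[0,K]$; set $h=\zeta 1_{[0,K]}$ (restricted to $(0,\infty)$). Let $v>0$, and let $u=-vK/\hat s_0$ if $K<+\infty$, or $u$ be any real number if $K=+\infty$. Put $\hat\theta=\lambda\gamma(1-\rho^2)$, $\omega=W(\hat\theta v\eta^2T)$, $\hat K=K/\hat s_0$ and $\hat\zeta(x)=\zeta(\hat s_0x)$ for $x\ge 0$. Suppose $$\frac{\omega}{\eta^{2}T}+\frac{\omega^2}{2\eta^{2}T}\leq \frac{K}{s_0}\,\hat\theta\, v\, e^{-(\delta-\frac{\eta^2}{2})T}.$$ Then $p_h=D_{\zeta,K}+A_{\zeta,K}$, where $$D_{\zeta,K}=\lambda e^{-rT}u+\frac{e^{-rT}}{\gamma(1-\rho^2)}\left(\frac{\omega}{\eta^2T}+\frac{\omega^2}{2\eta^2T}\right),\qquad A_{\zeta,K}=-\frac{e^{-rT}}{\gamma(1-\rho^2)}\ln I,$$ with $$I=\mathbb{E}\left(\exp\left[-\hat\theta\left(\hat\zeta\left(\frac{\omega}{\hat\theta v\eta^2T}e^{\eta\sqrt{T}N}\right)-u-\frac{\omega}{\hat\theta\eta^2T}e^{\eta\sqrt{T}N}\right)1_{N\leq\frac{\ln\hat K}{\eta\sqrt T}+\frac{\omega}{\eta\sqrt T}}\right]\phi(N)\right),$$ $$\phi(y)=\exp\left(-\frac{\omega}{\eta^2T}\left(e^{\eta\sqrt Ty}-1-\eta\sqrt Ty\right)\right)\exp\left(\left(\frac{\omega}{\eta^2T}e^{\eta\sqrt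 Ty}-\hat\theta v\hat K\right)_+\right)$$ (conventions $\ln(+\infty)=+\infty$, $\ln 0=-\infty$, $(-\infty)_+=0$). Moreover, $V(x_0,s_0,\lambda,h)=V_D\,V_A$, where $$V_D=-\frac1\gamma\exp\left(-\gamma e^{rT}(x_0+D_{\zeta,K})-\frac{(\mu-r)^2}{2\sigma^2}T\right),\qquad V_A=\exp\left(-\gamma e^{rT}A_{\zeta,K}\right).$$
   Context: Fix $T>0$, $r\in\mathbb R$, $\nu,\mu\in\mathbb R$, $\eta>0$, $\sigma>0$, $\rho\in(-1,1)$, $s_0>0$, $\lambda>0$, risk aversion $\gamma>0$ and initial wealth $x_0\in\mathbb R$. Let $N$ be a standard Gaussian random variable. Set $\delta=\nu-\eta\rho\frac{\mu-r}{\sigma}$ and $\hat s_0=s_0e^{(\delta-\frac{\eta^2}{2})T}$. (Model: a non-traded asset $dS_t=S_t(\nu dt+\eta dZ_t)$, a traded asset $dP_t=P_t(\mu dt+\sigma dB_t)$ with $d\langle Z,B\rangle_t=\rho\,dt$, a bond with rate $r$, and an agent with utility $U(x)=-\frac1\gamma e^{-\gamma x}$ receiving $\lambda$ units of $h(S_T)$ at $T$.) For a measurable $h$ bounded from below on $(0,\infty)$, the value function (maximal expected utility) and the asking reservation price are given by $$V(x_0,s_0,\lambda,h)=-\frac1\gamma e^{-\gamma x_0e^{rT}-\frac{(\mu-r)^2}{2\sigma^2}T}\left(\mathbb E\exp\left(-\lambda\gamma(1-\rho^2)h(\hat s_0e^{\eta\sqrt TN})\right)\right)^{\frac1{1-\rho^2}},$$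 $$p_h=-\frac{e^{-rT}}{\gamma(1-\rho^2)}\ln\mathbb E\exp\left(-\lambda\gamma(1-\rho^2)h(\hat s_0e^{\eta\sqrt TN})\right).$$ $W$ denotes the Lambert function, the inverse of $x\in(-1,\infty)\mapsto xe^x\in(-1/e,\infty)$; $x_+=\max(x,0)$. *)

theory Defs
  imports "HOL-Probability.Probability"
begin

definition gaussE :: "(real \<Rightarrow> real) \<Rightarrow> real" where
  "gaussE f = (LINT y|lborel. std_normal_density y * f y)"

definition lambertW :: "real \<Rightarrow> real" where
  "lambertW y = (THE x. x > -1 \<and> x * exp x = y)"

definition eln :: "ereal \<Rightarrow> ereal" where
  "eln x = (if x = \<infinity> then \<infinity> else if x \<le> 0 then -\<infinity> else ereal (ln (real_of_ereal x)))"

definition delta_par :: "real \<Rightarrow> real \<Rightarrow> real \<Rightarrow> real \<Rightarrow> real \<Rightarrow> real \<Rightarrow> real" where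
  "delta_par \<nu> \<eta> \<rho> \<mu> r \<sigma> = \<nu> - \<eta> * \<rho> * (\<mu> - r) / \<sigma>"

definition s_hat :: "real \<Rightarrow> real \<Rightarrow> real \<Rightarrow> real \<Rightarrow> real \<Rightarrow> real \<Rightarrow> real \<Rightarrow> real \<Rightarrow> real" where
  "s_hat s0 T \<nu> \<eta> \<rho> \<mu> r \<sigma> = s0 * exp ((delta_par \<nu> \<eta> \<rho> \<mu> r \<sigma> - \<eta>\<^sup>2 / 2) * T)"

definition value_fn ::
  "real \<Rightarrow> real \<Rightarrow> real \<Rightarrow> real \<Rightarrow> real \<Rightarrow> real \<Rightarrow> real \<Rightarrow> real \<Rightarrow> real
   \<Rightarrow> real \<Rightarrow> real \<Rightarrow> (real \<Rightarrow> real) \<Rightarrow> real" where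
  "value_fn T r \<nu> \<mu> \<eta> \<sigma> \<rho> \<gamma> x0 s0 lam h =
     - (1 / \<gamma>) * exp (- \<gamma> * x0 * exp (r * T) - (\<mu> - r)\<^sup>2 / (2 * \<sigma>\<^sup>2) * T)
     * (gaussE (\<lambda>y. exp (- lam * \<gamma> * (1 - \<rho>\<^sup>2)
            * h (s_hat s0 T \<nu> \<eta> \<rho> \<mu> r \<sigma> * exp (\<eta> * sqrt T * y))))) powr (1 / (1 - \<rho>\<^sup>2))"

definition res_price ::
  "real \<Rightarrow> real \<Rightarrow> real \<Rightarrow> real \<Rightarrow> real \<Rightarrow> real \<Rightarrow> real \<Rightarrow> real \<Rightarrow> real
   \<Rightarrow> real \<Rightarrow> (real \<Rightarrow> real) \<Rightarrow> real" where
  "res_price T r \<nu> \<mu> \<eta> \<sigma> \<rho> \<gamma> s0 lam h =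
     - (exp (- r * T) / (\<gamma> * (1 - \<rho>\<^sup>2)))
     * ln (gaussE (\<lambda>y. exp (- lam * \<gamma> * (1 - \<rho>\<^sup>2)
            * h (s_hat s0 T \<nu> \<eta> \<rho> \<mu> r \<sigma> * exp (\<eta> * sqrt T * y)))))"

end

theory Submission
  imports Defs
begin
lemma lborel_not_AE_False: "\<not> (AE (x::real) in lborel. False)"
proof
  assume "AE (x::real) in lborel. False"
  then have "emeasure lborel {x \<in> space lborel. \<not> False} = 0"
    by (subst (asm) AE_iff_measurable[of "{x \<in> space lborel. \<not> False}"]) auto
  then show False by simp
qed

lemma integral_pos_lborel:
  fixes f :: "real \<Rightarrow> real"
  assumes "integrable lborel f" "\<And>x. f x > 0"
  shows "integral\<^sup>L lborel f > 0"
proof -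
  have "integral\<^sup>L lborel f \<ge> 0" using assms by (simp add: less_imp_le)
  moreover have "integral\<^sup>L lborel f \<noteq> 0"
  proof
    assume "integral\<^sup>L lborel f = 0"
    then have "AE x in lborel. f x = 0"
      using integral_nonneg_eq_0_iff_AE[of lborel f] assms by (auto intro: less_imp_le)
    moreover have "AE x in lborel. f x = 0 \<longrightarrow> False"
      using assms(2) by (intro AE_I2) (metis less_irrefl)
    ultimately have "AE (x::real) in lborel. False" by (rule AE_mp)
    then show False using lborel_not_AE_False by blast
  qed
  ultimately show ?thesis by linarith
qed

lemma lambertW_pos:
  fixes y :: real assumes y: "y > 0"
  shows "lambertW y > 0 \<and> lambertW y * exp (lambertW y) = y"
proof -
  have "\<exists>x\<ge>0. x \<le> y \<and> x * exp x = y"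
  proof (rule IVT)
    show "0 * exp 0 \<le> y" using y by simp
    have "1 \<le> exp y" using y by simp
    then show "y \<le> y * exp y" using y by (simp add: mult_le_cancel_left1)
  qed (use y in \<open>auto intro!: continuous_intros\<close>)
  then obtain x where x: "x \<ge> 0" "x * exp x = y" by blast
  then have xpos: "x > 0" using y by (cases "x = 0") auto
  have uniq: "z = x" if "z > -1" "z * exp z = y" for z
  proof -
    have zpos: "z > 0"
    proof (rule ccontr)
      assume "\<not> z > 0"
      then have "z * exp z \<le> 0" by (simp add: mult_nonpos_nonneg)
      then show False using that y by simp
    qed
    show ?thesis
    proof (rule ccontr)
      assume "z \<noteq> x"
      then consider "z < x" | "x < z" by linarith
      then show False
      proof cases
        case 1
        then have "z * exp z < x * exp x" using zpos by (intro mult_strict_mono) auto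
        then show False using that x by simp
      next
        case 2
        then have "x * exp x < z * exp z" using xpos by (intro mult_strict_mono) auto
        then show False using that x by simp
      qed
    qed
  qed
  have "lambertW y = x" unfolding lambertW_def
    by (rule the_equality) (use x xpos uniq in auto)
  then show ?thesis using x xpos by simp
qed

lemma cond_equiv:
  fixes K :: ereal and a sh \<omega> y :: real
  assumes a: "a > 0" and sh: "sh > 0" and K: "K \<ge> 0"
  shows "(ereal y \<le> eln (K / ereal sh) / ereal a + ereal (\<omega> / a)) \<longleftrightarrow> ereal (sh * exp (a*y - \<omega>)) \<le> K"
proof (cases K)
  case PInf
  then show ?thesis using a sh by (simp add: eln_def)
next
  case MInf
  then show ?thesis using K by simp
next
  case (real k)
  then have k: "k \<ge> 0" using K by simp
  show ?thesis
  proof (cases "k = 0")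
    case True
    have "sh * exp (a*y-\<omega>) > 0" using sh by simp
    show ?thesis using True real a sh by (simp add: eln_def) (simp add: not_le)
  next
    case False
    then have kp: "k > 0" using k by simp
    have "(ereal y \<le> eln (K / ereal sh) / ereal a + ereal (\<omega> / a)) \<longleftrightarrow> y \<le> ln (k/sh) / a + \<omega> / a"
      using real a sh kp divide_pos_pos[OF kp sh] by (simp add: eln_def) (metis divide_pos_pos not_le kp sh)
    also have "\<dots> \<longleftrightarrow> a*y - \<omega> \<le> ln (k/sh)" using a by (simp add: field_simps)
    also have "\<dots> \<longleftrightarrow> exp (a*y - \<omega>) \<le> k/sh" using kp sh by (subst ln_ge_iff) auto
    also have "\<dots> \<longleftrightarrow> sh * exp (a*y - \<omega>) \<le> k" using sh by (simp add: field_simps)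
    finally show ?thesis using real by simp
  qed
qed

lemma pos_part:
  fixes K :: ereal and P Q sh :: real
  assumes Q: "Q > 0" and sh: "sh > 0" and K: "K \<ge> 0"
  shows "real_of_ereal (max 0 (ereal P - ereal Q * (K / ereal sh)))
     = (if K = \<infinity> then 0 else max 0 (P - Q * real_of_ereal K / sh))"
proof (cases K)
  case PInf
  then show ?thesis using Q sh by simp
next
  case MInf
  then show ?thesis using K by simp
next
  case (real k)
  then show ?thesis using sh by (simp add: max_def)
qed
theorem theorem2:
  fixes T r \<nu> \<mu> \<eta> \<sigma> \<rho> s0 lam \<gamma> x0 v u :: real
    and K :: ereal
    and \<zeta> h :: "real \<Rightarrow> real"
  assumes T: "T > 0" and eta: "\<eta> > 0" and sigma: "\<sigma> > 0"
    and rho: "-1 < \<rho>" "\<rho> < 1"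
    and s0: "s0 > 0" and lam: "lam > 0" and gam: "\<gamma> > 0"
    and K: "K \<ge> 0"
    and zeta_meas: "\<zeta> \<in> borel_measurable borel"
    and zeta_bdd: "\<exists>B. \<forall>x. 0 \<le> x \<and> ereal x \<le> K \<longrightarrow> B \<le> \<zeta> x"
    and h_def: "h = (\<lambda>x. if 0 \<le> x \<and> ereal x \<le> K then \<zeta> x else 0)"
    and v: "v > 0"
    and u: "K \<noteq> \<infinity> \<Longrightarrow> u = - v * real_of_ereal K / s_hat s0 T \<nu> \<eta> \<rho> \<mu> r \<sigma>"
  defines "sh \<equiv> s_hat s0 T \<nu> \<eta> \<rho> \<mu> r \<sigma>"
    and "\<theta> \<equiv> lam * \<gamma> * (1 - \<rho>\<^sup>2)"
  defines "\<omega> \<equiv> lambertW (\<theta> * v * \<eta>\<^sup>2 * T)"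
    and "Kh \<equiv> K / ereal sh"
    and "\<zeta>h \<equiv> (\<lambda>x. \<zeta> (sh * x))"
  defines "\<phi> \<equiv> (\<lambda>y. exp (- (\<omega> / (\<eta>\<^sup>2 * T)) * (exp (\<eta> * sqrt T * y) - 1 - \<eta> * sqrt T * y))
                  * exp (real_of_ereal (max 0 (ereal (\<omega> / (\<eta>\<^sup>2 * T) * exp (\<eta> * sqrt T * y))
                                               - ereal (\<theta> * v) * Kh))))"
  defines "I \<equiv> gaussE (\<lambda>y. exp (- \<theta> *
               (\<zeta>h (\<omega> / (\<theta> * v * \<eta>\<^sup>2 * T) * exp (\<eta> * sqrt T * y)) - u
                 - \<omega> / (\<theta> * \<eta>\<^sup>2 * T) * exp (\<eta> * sqrt T * y))
               * (if ereal y \<le> eln Kh / ereal (\<eta> * sqrt T) + ereal (\<omega> / (\<eta> * sqrt T)) then 1 else 0))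
             * \<phi> y)"
  defines "D \<equiv> lam * exp (- r * T) * u
              + exp (- r * T) / (\<gamma> * (1 - \<rho>\<^sup>2)) * (\<omega> / (\<eta>\<^sup>2 * T) + \<omega>\<^sup>2 / (2 * \<eta>\<^sup>2 * T))"
    and "A \<equiv> - (exp (- r * T) / (\<gamma> * (1 - \<rho>\<^sup>2))) * ln I"
  assumes ineq: "ereal (\<omega> / (\<eta>\<^sup>2 * T) + \<omega>\<^sup>2 / (2 * \<eta>\<^sup>2 * T))
      \<le> K / ereal s0 * ereal (\<theta> * v * exp (- (delta_par \<nu> \<eta> \<rho> \<mu> r \<sigma> - \<eta>\<^sup>2 / 2) * T))"
  shows "res_price T r \<nu> \<mu> \<eta> \<sigma> \<rho> \<gamma> s0 lam h = D + A
    \<and> value_fn T r \<nu> \<mu> \<eta> \<sigma> \<rho> \<gamma> x0 s0 lam h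
        = (- (1 / \<gamma>) * exp (- \<gamma> * exp (r * T) * (x0 + D) - (\<mu> - r)\<^sup>2 / (2 * \<sigma>\<^sup>2) * T))
          * exp (- \<gamma> * exp (r * T) * A)"
proof -
  have rho2: "\<rho>\<^sup>2 < 1" using rho by (simp add: abs_less_iff power2_less_1_iff[symmetric] abs_square_less_1)
  have th: "\<theta> > 0" unfolding \<theta>_def using lam gam rho2 by simp
  define a where "a = \<eta> * sqrt T"
  have a: "a > 0" unfolding a_def using eta T by simp
  have a2: "a\<^sup>2 = \<eta>\<^sup>2 * T" unfolding a_def using T by (simp add: power_mult_distrib)
  have Wpos: "\<theta> * v * \<eta>\<^sup>2 * T > 0" using th v eta T by simp
  have om: "\<omega> > 0" "\<omega> * exp \<omega> = \<theta> * v * \<eta>\<^sup>2 * T"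
    using lambertW_pos[OF Wpos] unfolding \<omega>_def by auto
  have sh: "sh > 0" unfolding sh_def s_hat_def using s0 by simp
  have em: "\<omega> / (\<theta> * v * \<eta>\<^sup>2 * T) = exp (- \<omega>)"
    using om th v eta T by (simp add: exp_minus field_simps)
  have c0: "\<omega> / (\<eta>\<^sup>2 * T) = \<theta> * v * exp (- \<omega>)"
    using om th v eta T by (simp add: exp_minus field_simps)
  obtain B where B: "\<And>x. 0 \<le> x \<Longrightarrow> ereal x \<le> K \<Longrightarrow> B \<le> \<zeta> x" using zeta_bdd by blast
  have hlow: "min B 0 \<le> h x" for x unfolding h_def using B by (auto simp: min.coboundedI1)
  define g where "g = (\<lambda>y. exp (- lam * \<gamma> * (1 - \<rho>\<^sup>2) * h (sh * exp (\<eta> * sqrt T * y))))"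
  define F where "F = (\<lambda>y. std_normal_density y * g y)"
  define J where "J = (\<lambda>y. exp (- \<theta> *
               (\<zeta>h (\<omega> / (\<theta> * v * \<eta>\<^sup>2 * T) * exp (\<eta> * sqrt T * y)) - u
                 - \<omega> / (\<theta> * \<eta>\<^sup>2 * T) * exp (\<eta> * sqrt T * y))
               * (if ereal y \<le> eln Kh / ereal (\<eta> * sqrt T) + ereal (\<omega> / (\<eta> * sqrt T)) then 1 else 0))
             * \<phi> y)"
  define C where "C = exp (- \<theta> * u - \<omega> / (\<eta>\<^sup>2 * T) - \<omega>\<^sup>2 / (2 * \<eta>\<^sup>2 * T))"
  have I': "I = integral\<^sup>L lborel (\<lambda>y. std_normal_density y * J y)"
    unfolding I_def gaussE_def J_def ..
  have E': "gaussE g = integral\<^sup>L lborel F" unfolding gaussE_def F_def ..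
  have pt: "F (- (\<omega> / a) + 1 * y) = C * (std_normal_density y * J y)" for y
  proof -
    define X where "X = exp (a*y - \<omega>)"
    define e where "e = exp (a*y)"
    define s where "s = 1 / sqrt (2 * pi)"
    have Xpos: "X > 0" unfolding X_def by simp
    have shX: "sh * exp (\<eta> * sqrt T * (- (\<omega> / a) + 1 * y)) = sh * X"
      unfolding X_def a_def[symmetric] using a by (simp add: algebra_simps)
    have zarg: "\<omega> / (\<theta> * v * \<eta>\<^sup>2 * T) * exp (\<eta> * sqrt T * y) = X"
      unfolding em X_def a_def[symmetric] by (simp add: exp_diff exp_minus field_simps)
    have cond: "(ereal y \<le> eln Kh / ereal (\<eta> * sqrt T) + ereal (\<omega> / (\<eta> * sqrt T))) \<longleftrightarrow> ereal (sh * X) \<le> K"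
      unfolding Kh_def X_def a_def[symmetric] using cond_equiv[OF a sh K] .
    have hX: "h (sh * X) = (if ereal (sh*X) \<le> K then \<zeta> (sh*X) else 0)"
      unfolding h_def using sh Xpos by simp
    have e1: "\<omega> / (\<eta>\<^sup>2 * T) * exp (\<eta> * sqrt T * y) = \<theta> * v * X"
      unfolding c0 X_def a_def[symmetric] by (simp add: exp_diff exp_minus field_simps)
    have tv: "\<theta> * v > 0" using th v by simp
    have pp: "real_of_ereal (max 0 (ereal (\<omega> / (\<eta>\<^sup>2 * T) * exp (\<eta> * sqrt T * y)) - ereal (\<theta> * v) * Kh))
       = (if ereal (sh*X) \<le> K then 0 else \<theta> * v * X - \<theta> * v * real_of_ereal K / sh)"
    proof (cases K)
      case (real k)
      have eq: "\<theta> * v * X - \<theta> * v * k/sh = \<theta> * v * (sh * X - k)/sh" using sh by (simp add: field_simps)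
      show ?thesis
      proof (cases "sh * X \<le> k")
        case True
        then have "\<theta> * v * (sh * X - k)/sh \<le> 0" using tv sh
          by (intro divide_nonpos_pos mult_nonneg_nonpos) auto
        then show ?thesis unfolding e1 Kh_def pos_part[OF tv sh K] using True real eq by simp
      next
        case False
        then have "\<theta> * v * (sh * X - k)/sh > 0" using tv sh by simp
        then show ?thesis unfolding e1 Kh_def pos_part[OF tv sh K] using False real eq by simp
      qed
    qed (use K th v in \<open>auto simp: e1 Kh_def pos_part[OF tv sh K]\<close>)
    have Fv: "F (- (\<omega> / a) + 1 * y) = s * exp (- (- (\<omega> / a) + 1 * y)\<^sup>2 / 2 + (- \<theta> * h (sh * X)))"
    proof -
      have "- lam * \<gamma> * (1 - \<rho>\<^sup>2) = - \<theta>" unfolding \<theta>_def by simp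
      then show ?thesis unfolding F_def g_def s_def std_normal_density_def shX
        by (simp only: exp_add mult.assoc)
    qed
    have Jv: "std_normal_density y * J y = s * exp (- y\<^sup>2 / 2 + (- \<theta> * (\<zeta> (sh * X) - u - \<omega> / (\<theta> * \<eta>\<^sup>2 * T) * e)
          * (if ereal (sh*X) \<le> K then 1 else 0))
         + (- (\<omega> / (\<eta>\<^sup>2 * T)) * (e - 1 - a * y))
         + (if ereal (sh*X) \<le> K then 0 else \<theta> * v * X - \<theta> * v * real_of_ereal K / sh))"
      unfolding J_def \<phi>_def std_normal_density_def s_def \<zeta>h_def zarg cond pp e_def a_def
      by (simp only: exp_add mult.assoc)
    have Cv: "C * (s * exp Z) = s * exp ((- \<theta> * u - \<omega> / (\<eta>\<^sup>2 * T) - \<omega>\<^sup>2 / (2 * \<eta>\<^sup>2 * T)) + Z)" for Z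
      unfolding C_def by (simp add: exp_add)
    have ex: "- (- (\<omega> / a) + 1 * y)\<^sup>2 / 2 + (- \<theta> * h (sh * X)) =
       (- \<theta> * u - \<omega> / (\<eta>\<^sup>2 * T) - \<omega>\<^sup>2 / (2 * \<eta>\<^sup>2 * T)) + (- y\<^sup>2 / 2 + (- \<theta> * (\<zeta> (sh * X) - u - \<omega> / (\<theta> * \<eta>\<^sup>2 * T) * e)
          * (if ereal (sh*X) \<le> K then 1 else 0))
         + (- (\<omega> / (\<eta>\<^sup>2 * T)) * (e - 1 - a * y))
         + (if ereal (sh*X) \<le> K then 0 else \<theta> * v * X - \<theta> * v * real_of_ereal K / sh))"
    proof (cases "ereal (sh*X) \<le> K")
      have r1: "\<eta>\<^sup>2 * T = a\<^sup>2" "2 * \<eta>\<^sup>2 * T = 2 * a\<^sup>2" "\<theta> * \<eta>\<^sup>2 * T = \<theta> * a\<^sup>2"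
        using a2 by simp_all
      case True
      then show ?thesis unfolding hX r1 using True a th
        by (simp add: field_simps power2_eq_square)
    next
      case False
      then have Kf: "K \<noteq> \<infinity>" by auto
      have uu: "u = - v * real_of_ereal K / sh" using u[OF Kf] unfolding sh_def .
      have eX: "\<theta> * v * X = \<omega> / (\<eta>\<^sup>2 * T) * e" using e1[symmetric] unfolding e_def a_def .
      have r1: "\<eta>\<^sup>2 * T = a\<^sup>2" "2 * \<eta>\<^sup>2 * T = 2 * a\<^sup>2" "\<theta> * \<eta>\<^sup>2 * T = \<theta> * a\<^sup>2"
        using a2 by simp_all
      show ?thesis unfolding hX uu eX using False unfolding r1 using a th sh
        by (simp add: field_simps power2_eq_square)
    qed
    show ?thesis unfolding Fv Jv Cv ex ..
  qed
  have EI: "integral\<^sup>L lborel F = C * I"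
    using lborel_integral_real_affine[of 1 F "- (\<omega> / a)"] pt by (simp add: I')
  note zeta_meas[measurable]
  have hmeas[measurable]: "h \<in> borel_measurable borel" unfolding h_def by measurable
  have Fint: "integrable lborel F"
  proof (rule Bochner_Integration.integrable_bound)
    show "integrable lborel (\<lambda>y. std_normal_density y * exp (- \<theta> * min B 0))"
      by (intro integrable_mult_left) simp
    show "F \<in> borel_measurable lborel" unfolding F_def g_def by measurable
    show "AE y in lborel. norm (F y) \<le> norm (std_normal_density y * exp (- \<theta> * min B 0))"
    proof (intro AE_I2)
      fix y
      have "- lam * \<gamma> * (1 - \<rho>\<^sup>2) * h (sh * exp (\<eta> * sqrt T * y)) \<le> - \<theta> * min B 0"
        using hlow[of "sh * exp (\<eta> * sqrt T * y)"] th unfolding \<theta>_def by (simp add: mult_left_mono)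
      then have "g y \<le> exp (- \<theta> * min B 0)" unfolding g_def by simp
      then show "norm (F y) \<le> norm (std_normal_density y * exp (- \<theta> * min B 0))"
        unfolding F_def g_def by (simp add: abs_mult normal_density_nonneg mult_left_mono)
    qed
  qed
  have Epos: "integral\<^sup>L lborel F > 0"
    by (rule integral_pos_lborel[OF Fint]) (simp add: F_def g_def normal_density_pos)
  have Cpos: "C > 0" unfolding C_def by simp
  have Ipos: "I > 0" using Epos EI Cpos by (simp add: zero_less_mult_iff)
  have lnE: "ln (gaussE g) = ln C + ln I" using E' EI Cpos Ipos by (simp add: ln_mult)
  have lnC: "ln C = - \<theta> * u - \<omega> / (\<eta>\<^sup>2 * T) - \<omega>\<^sup>2 / (2 * \<eta>\<^sup>2 * T)" unfolding C_def by simp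
  have rp: "res_price T r \<nu> \<mu> \<eta> \<sigma> \<rho> \<gamma> s0 lam h = - (exp (- r * T) / (\<gamma> * (1 - \<rho>\<^sup>2))) * ln (gaussE g)"
    unfolding res_price_def g_def sh_def ..
  have g1: "res_price T r \<nu> \<mu> \<eta> \<sigma> \<rho> \<gamma> s0 lam h = D + A"
  proof -
    define c where "c = exp (- r * T) / (\<gamma> * (1 - \<rho>\<^sup>2))"
    have q: "1 - \<rho>\<^sup>2 \<noteq> 0" using rho2 by simp
    have tc: "c * \<theta> = lam * exp (- r * T)" unfolding c_def \<theta>_def using gam q by (simp add: field_simps)
    have "D + A - (- c * (ln C + ln I)) = u * (lam * exp (- r * T) - c * \<theta>)"
      unfolding D_def A_def lnC c_def by (simp add: algebra_simps)
    then have "D + A = - c * (ln C + ln I)" using tc by simp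
    then show ?thesis unfolding rp lnE c_def by simp
  qed
  have vf: "value_fn T r \<nu> \<mu> \<eta> \<sigma> \<rho> \<gamma> x0 s0 lam h = - (1 / \<gamma>) * exp (- \<gamma> * x0 * exp (r * T) - (\<mu> - r)\<^sup>2 / (2 * \<sigma>\<^sup>2) * T)
     * exp (1 / (1 - \<rho>\<^sup>2) * ln (gaussE g))"
    unfolding value_fn_def g_def[symmetric] sh_def[symmetric] using Epos E' by (simp add: powr_def)
  have ex: "- \<gamma> * x0 * exp (r * T) - (\<mu> - r)\<^sup>2 / (2 * \<sigma>\<^sup>2) * T + 1 / (1 - \<rho>\<^sup>2) * ln (gaussE g)
     = (- \<gamma> * exp (r * T) * (x0 + D) - (\<mu> - r)\<^sup>2 / (2 * \<sigma>\<^sup>2) * T) + (- \<gamma> * exp (r * T) * A)"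
  proof -
    have "D + A = - (exp (- r * T) / (\<gamma> * (1 - \<rho>\<^sup>2))) * ln (gaussE g)" using g1 rp by simp
    then have "- \<gamma> * exp (r * T) * (D + A) = 1 / (1 - \<rho>\<^sup>2) * ln (gaussE g)"
      using gam rho2 by (simp add: field_simps exp_minus)
    then show ?thesis by (simp add: algebra_simps)
  qed
  have g2: "value_fn T r \<nu> \<mu> \<eta> \<sigma> \<rho> \<gamma> x0 s0 lam h
        = (- (1 / \<gamma>) * exp (- \<gamma> * exp (r * T) * (x0 + D) - (\<mu> - r)\<^sup>2 / (2 * \<sigma>\<^sup>2) * T))
          * exp (- \<gamma> * exp (r * T) * A)"
    unfolding vf using ex by (simp add: exp_add[symmetric] mult.assoc)
  show ?thesis using g1 g2 by blast
qed

end
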